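(* Let $G$ be a finite, simple, connected $(q+1)$-regular graph with $q\ge 1$, with $n$ vertices and $m$ edges, let $a\in[0,1]$ and $b\in\mathbb R$, and let $\tilde{\mathbf U}$ be the generalized Grover matrix of $G$ with parameters $a,b$. Set $\eta=(1-q)a+b(q+1)$ and $\sigma=b((1-q)a+bq)$. Then the $2m$ eigenvalues of $\tilde{\mathbf U}$ (counted with multiplicity) are: the $2n$ values \[ \lambda=\frac{\mu\eta\pm\sqrt{\mu^2\eta^2-4\sigma}}{2}, \] where $\mu$ runs over the eigenvalues of $\mathbf P(G)$ (with multiplicity), and the $2(m-n)$ values $b$ and $-b$, each with multiplicity $m-n$.
   Context: $D(G)$ is the set of $2m$ arcs of $G$ (for each edge $uv$, both $(u,v)$ and $(v,u)$); for $e=(u,v)$, $o(e)=u$, $t(e)=v$, $e^{-1}=(v,u)$, and $d_v=\deg v$. The generalized Grover matrix $\tilde{\mathbf U}=(\tilde U_{ef})_{e,f\in D(G)}$ has $\tilde U_{ef}=(2/d_{t(f)}-1)a+b$ if $t(f)=o(e)$ and $f\ne e^{-1}$; $\tilde U_{ef}=(2/d_{t(f)}-1)a$ if $f=e^{-1}$; $0$ otherwise. $\mathbf P(G)$ has entries $P_{uv}=1/\deg u$ if $u,v$ adjacent and $0$ otherwise. *)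

theory Defs
  imports "Jordan_Normal_Form.Char_Poly"
begin

definition simple_graph :: "nat \<Rightarrow> (nat \<Rightarrow> nat \<Rightarrow> bool) \<Rightarrow> bool" where
  "simple_graph n E \<longleftrightarrow> (\<forall>u v. E u v \<longrightarrow> u < n \<and> v < n) \<and>
     (\<forall>u v. E u v \<longrightarrow> E v u) \<and> (\<forall>u. \<not> E u u)"

definition connected_graph :: "nat \<Rightarrow> (nat \<Rightarrow> nat \<Rightarrow> bool) \<Rightarrow> bool" where
  "connected_graph n E \<longleftrightarrow> (\<forall>u<n. \<forall>v<n. E\<^sup>*\<^sup>* u v)"

definition deg :: "nat \<Rightarrow> (nat \<Rightarrow> nat \<Rightarrow> bool) \<Rightarrow> nat \<Rightarrow> nat" where
  "deg n E u = card {v. v < n \<and> E u v}"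

definition regular_graph :: "nat \<Rightarrow> (nat \<Rightarrow> nat \<Rightarrow> bool) \<Rightarrow> nat \<Rightarrow> bool" where
  "regular_graph n E k \<longleftrightarrow> (\<forall>u<n. deg n E u = k)"

definition num_edges :: "nat \<Rightarrow> (nat \<Rightarrow> nat \<Rightarrow> bool) \<Rightarrow> nat" where
  "num_edges n E = card {{u, v} | u v. u < n \<and> v < n \<and> E u v}"

text \<open>The arcs D(G), in a fixed enumeration (the characteristic polynomial does not
  depend on the enumeration). An arc e = (u,v) has o(e) = u, t(e) = v.\<close>
definition arcs :: "nat \<Rightarrow> (nat \<Rightarrow> nat \<Rightarrow> bool) \<Rightarrow> (nat \<times> nat) list" where
  "arcs n E = [(u, v). u \<leftarrow> [0..<n], v \<leftarrow> [0..<n], E u v]"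

definition gen_grover :: "nat \<Rightarrow> (nat \<Rightarrow> nat \<Rightarrow> bool) \<Rightarrow> real \<Rightarrow> real \<Rightarrow> real mat" where
  "gen_grover n E a b =
     (let A = arcs n E in
      mat (length A) (length A) (\<lambda>(i, j).
        let e = A ! i; f = A ! j; d = real (deg n E (snd f)) in
        if f = (snd e, fst e) then (2 / d - 1) * a
        else if snd f = fst e then (2 / d - 1) * a + b
        else 0))"

definition trans_mat :: "nat \<Rightarrow> (nat \<Rightarrow> nat \<Rightarrow> bool) \<Rightarrow> real mat" where
  "trans_mat n E = mat n n (\<lambda>(u, v). if E u v then 1 / real (deg n E u) else 0)"

end

theory Submission
  imports Defs
begin


lemma sylvester_det:
  fixes A B :: "'a :: idom mat"
  assumes A: "A \<in> carrier_mat p q" and B: "B \<in> carrier_mat q p"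
  shows "det (1\<^sub>m p - A * B) = det (1\<^sub>m q - B * A)"
proof -
  define M where "M = four_block_mat (1\<^sub>m p) A B (1\<^sub>m q)"
  define X where "X = four_block_mat (1\<^sub>m p) (- A) (0\<^sub>m q p) (1\<^sub>m q)"
  have mA: "- A \<in> carrier_mat p q" by (rule uminus_carrier_mat[OF A])
  have M: "M \<in> carrier_mat (p+q) (p+q)" unfolding M_def by (rule four_block_carrier_mat[OF one_carrier_mat one_carrier_mat])
  have X: "X \<in> carrier_mat (p+q) (p+q)" unfolding X_def by (rule four_block_carrier_mat[OF one_carrier_mat one_carrier_mat])
  have AB: "A * B \<in> carrier_mat p p" by (rule mult_carrier_mat[OF A B])
  have BA: "B * A \<in> carrier_mat q q" by (rule mult_carrier_mat[OF B A])
  have AA: "A + - A = 0\<^sub>m p q" by (intro eq_matI) (use A in auto)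
  have AA2: "- A + A = 0\<^sub>m p q" by (intro eq_matI) (use A in auto)
  have mAB: "(- A) * B = - (A * B)" by (intro eq_matI) (use A B in auto)
  have BmA: "B * (- A) = - (B * A)" by (intro eq_matI) (use A B in auto)
  have AB2: "1\<^sub>m p + - (A * B) = 1\<^sub>m p - A * B" by (rule add_uminus_minus_mat[OF one_carrier_mat AB])
  have BA2: "- (B * A) + 1\<^sub>m q = 1\<^sub>m q - B * A" by (intro eq_matI) (use A B in auto)
  have XM0: "X * M = four_block_mat (1\<^sub>m p * 1\<^sub>m p + (- A) * B) (1\<^sub>m p * A + (- A) * 1\<^sub>m q)
      (0\<^sub>m q p * 1\<^sub>m p + 1\<^sub>m q * B) (0\<^sub>m q p * A + 1\<^sub>m q * 1\<^sub>m q)"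
    unfolding X_def M_def
    by (rule mult_four_block_mat[OF one_carrier_mat mA zero_carrier_mat one_carrier_mat one_carrier_mat A B one_carrier_mat])
  have "X * M = four_block_mat (1\<^sub>m p - A * B) (0\<^sub>m p q) B (1\<^sub>m q)"
    unfolding XM0 mAB left_mult_one_mat[OF one_carrier_mat] left_mult_one_mat[OF A] right_mult_one_mat[OF mA]
      left_mult_zero_mat[OF one_carrier_mat] left_mult_zero_mat[OF A] left_mult_one_mat[OF B]
      left_add_zero_mat[OF B] left_add_zero_mat[OF one_carrier_mat] AA AB2 ..
  then have 1: "det (X * M) = det (1\<^sub>m p - A * B)"
    using det_four_block_mat_upper_right_zero[OF minus_carrier_mat[OF AB] refl B one_carrier_mat] by simp
  have MX0: "M * X = four_block_mat (1\<^sub>m p * 1\<^sub>m p + A * 0\<^sub>m q p) (1\<^sub>m p * (- A) + A * 1\<^sub>m q)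
      (B * 1\<^sub>m p + 1\<^sub>m q * 0\<^sub>m q p) (B * (- A) + 1\<^sub>m q * 1\<^sub>m q)"
    unfolding X_def M_def
    by (rule mult_four_block_mat[OF one_carrier_mat A B one_carrier_mat one_carrier_mat mA zero_carrier_mat one_carrier_mat])
  have "M * X = four_block_mat (1\<^sub>m p) (0\<^sub>m p q) B (1\<^sub>m q - B * A)"
    unfolding MX0 BmA left_mult_one_mat[OF one_carrier_mat] left_mult_one_mat[OF mA] right_mult_one_mat[OF A]
      right_mult_zero_mat[OF A] right_mult_one_mat[OF B] right_mult_zero_mat[OF one_carrier_mat]
      right_add_zero_mat[OF B] right_add_zero_mat[OF one_carrier_mat] AA2 BA2 ..
  then have 2: "det (M * X) = det (1\<^sub>m q - B * A)"
    using det_four_block_mat_upper_right_zero[OF one_carrier_mat refl B minus_carrier_mat[OF BA]] by simp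
  have "det (X * M) = det (M * X)" unfolding det_mult[OF X M] det_mult[OF M X] by (rule mult.commute)
  with 1 2 show ?thesis by simp
qed


lemma set_arcs: "set (arcs n E) = {(u,v). u<n \<and> v<n \<and> E u v}"
  unfolding arcs_def by auto

lemma distinct_inner: "distinct ys \<Longrightarrow> distinct [(u,v). v \<leftarrow> ys, E u v]"
  by (induct ys) auto

lemma set_inner: "set [(u,v). v \<leftarrow> ys, E u v] = {(u,v) | v. v \<in> set ys \<and> E u v}"
  by (induct ys) auto

lemma distinct_comp: "distinct xs \<Longrightarrow> distinct ys \<Longrightarrow> distinct [(u,v). u \<leftarrow> xs, v \<leftarrow> ys, E u v]"
proof (induct xs)
  case (Cons x xs)
  then show ?case using distinct_inner[of ys E x] by (auto simp: set_inner)
qed simp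

lemma distinct_arcs: "distinct (arcs n E)"
  unfolding arcs_def by (rule distinct_comp) auto

lemma sum_nth_distinct:
  assumes "distinct xs"
  shows "(\<Sum>i\<in>{0..<length xs}. f (xs ! i)) = (\<Sum>x\<in>set xs. f x)"
proof -
  have "bij_betw (nth xs) {0..<length xs} (set xs)"
    using assms by (auto simp add: bij_betw_def inj_on_nth set_conv_nth)
  then show ?thesis by (rule sum.reindex_bij_betw)
qed

lemma card_arcs_deg:
  "card (set (arcs n E)) = (\<Sum>u<n. deg n E u)"
proof -
  have "set (arcs n E) = (SIGMA u:{..<n}. {v. v < n \<and> E u v})" unfolding set_arcs by auto
  then show ?thesis unfolding deg_def by (simp add: card_SigmaI)
qed

lemma card_arcs_edges:
  assumes "simple_graph n E"
  shows "card (set (arcs n E)) = 2 * num_edges n E"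
proof -
  let ?S = "set (arcs n E)"
  let ?h = "\<lambda>(u,v). {u,v::nat}"
  have img: "?h ` ?S = {{u, v} | u v. u < n \<and> v < n \<and> E u v}" unfolding set_arcs by auto
  have "card ?S = (\<Sum>y\<in>?h ` ?S. card {x\<in>?S. ?h x = y})"
    using card_eq_sum sum.image_gen[of ?S "\<lambda>_. 1::nat" ?h] by simp
  also have "\<dots> = (\<Sum>y\<in>?h ` ?S. 2)"
  proof (rule sum.cong[OF refl])
    fix y assume "y \<in> ?h ` ?S"
    then obtain u v where uv: "(u,v) \<in> ?S" and y: "y = {u,v}" by auto
    have uv2: "u < n" "v < n" "E u v" "E v u" "u \<noteq> v" using uv assms unfolding set_arcs simple_graph_def by auto
    have "{x\<in>?S. ?h x = y} = {(u,v),(v,u)}"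
      using uv2 unfolding y set_arcs by (auto simp: doubleton_eq_iff)
    then show "card {x\<in>?S. ?h x = y} = 2" using uv2 by simp
  qed
  finally show ?thesis using img unfolding num_edges_def by simp
qed



definition "Km n E = mat (length (arcs n E)) n (\<lambda>(i,v). if fst (arcs n E ! i) = v then 1 else 0 :: complex)"
definition "Lm n E = mat (length (arcs n E)) n (\<lambda>(i,v). if snd (arcs n E ! i) = v then 1 else 0 :: complex)"
definition "Rm n E = mat (length (arcs n E)) (length (arcs n E))
   (\<lambda>(i,j). if arcs n E ! j = prod.swap (arcs n E ! i) then 1 else 0 :: complex)"
definition "Am n E = mat n n (\<lambda>(v,w). if E v w then 1 else 0 :: complex)"
definition "dd n E i = (if fst (arcs n E ! i) < snd (arcs n E ! i) then 1 else -1 :: complex)"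
definition "Dm n E = mat (length (arcs n E)) (length (arcs n E))
   (\<lambda>(i,j). if i = j then dd n E i else 0)"

lemma Km_carrier[simp]: "Km n E \<in> carrier_mat (length (arcs n E)) n" unfolding Km_def by simp
lemma Lm_carrier[simp]: "Lm n E \<in> carrier_mat (length (arcs n E)) n" unfolding Lm_def by simp
lemma Rm_carrier[simp]: "Rm n E \<in> carrier_mat (length (arcs n E)) (length (arcs n E))" unfolding Rm_def by simp
lemma Am_carrier[simp]: "Am n E \<in> carrier_mat n n" unfolding Am_def by simp
lemma Dm_carrier[simp]: "Dm n E \<in> carrier_mat (length (arcs n E)) (length (arcs n E))" unfolding Dm_def by simp

lemma dims[simp]: "dim_row (Km n E) = length (arcs n E)" "dim_col (Km n E) = n"
  "dim_row (Lm n E) = length (arcs n E)" "dim_col (Lm n E) = n"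
  "dim_row (Rm n E) = length (arcs n E)" "dim_col (Rm n E) = length (arcs n E)"
  "dim_row (Dm n E) = length (arcs n E)" "dim_col (Dm n E) = length (arcs n E)"
  "dim_row (Am n E) = n" "dim_col (Am n E) = n"
  by (simp_all add: Km_def Lm_def Rm_def Dm_def Am_def)

lemma arcs_nth_in: "i < length (arcs n E) \<Longrightarrow> arcs n E ! i \<in> set (arcs n E)" by simp

lemma arcs_nth_props: "i < length (arcs n E) \<Longrightarrow> fst (arcs n E ! i) < n \<and> snd (arcs n E ! i) < n \<and> E (fst (arcs n E ! i)) (snd (arcs n E ! i))"
  using arcs_nth_in[of i n E] unfolding set_arcs by (cases "arcs n E ! i") auto

lemma KLt: "Km n E * transpose_mat (Lm n E) = mat (length (arcs n E)) (length (arcs n E))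
   (\<lambda>(i,j). if snd (arcs n E ! j) = fst (arcs n E ! i) then 1 else 0)"
proof (rule eq_matI)
  fix i j assume i: "i < dim_row (mat (length (arcs n E)) (length (arcs n E))
   (\<lambda>(i,j). if snd (arcs n E ! j) = fst (arcs n E ! i) then 1 else (0::complex)))"
    and j: "j < dim_col (mat (length (arcs n E)) (length (arcs n E))
   (\<lambda>(i,j). if snd (arcs n E ! j) = fst (arcs n E ! i) then 1 else (0::complex)))"
  have i': "i < length (arcs n E)" and j': "j < length (arcs n E)" using i j by auto
  have "(Km n E * transpose_mat (Lm n E)) $$ (i,j) =
    (\<Sum>v\<in>{0..<n}. (if fst (arcs n E ! i) = v then 1 else 0) * (if snd (arcs n E ! j) = v then 1 else 0))"
    using i' j' by (simp add: Km_def Lm_def scalar_prod_def)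
  also have "\<dots> = (\<Sum>v\<in>{0..<n}. if v = fst (arcs n E ! i) then (if snd (arcs n E ! j) = v then 1 else 0) else 0)"
    by (rule sum.cong) auto
  also have "\<dots> = (if snd (arcs n E ! j) = fst (arcs n E ! i) then 1 else 0)"
    using arcs_nth_props[OF i'] by (simp add: sum.delta')
  finally show "(Km n E * transpose_mat (Lm n E)) $$ (i,j) = mat (length (arcs n E)) (length (arcs n E))
   (\<lambda>(i,j). if snd (arcs n E ! j) = fst (arcs n E ! i) then 1 else 0) $$ (i,j)" using i' j' by simp
qed auto

lemma LtK: assumes G: "simple_graph n E" shows "transpose_mat (Lm n E) * Km n E = Am n E"
proof (rule eq_matI)
  fix v w assume "v < dim_row (Am n E)" "w < dim_col (Am n E)"
  then have v: "v < n" and w: "w < n" by auto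
  have "(transpose_mat (Lm n E) * Km n E) $$ (v,w) =
    (\<Sum>i\<in>{0..<length (arcs n E)}. (\<lambda>x. (if snd x = v then 1 else 0) * (if fst x = w then 1 else 0)) (arcs n E ! i))"
    using v w by (simp add: Km_def Lm_def scalar_prod_def)
  also have "\<dots> = (\<Sum>x\<in>set (arcs n E). (if snd x = v then 1 else 0) * (if fst x = w then 1 else 0))"
    by (rule sum_nth_distinct[OF distinct_arcs])
  also have "\<dots> = (\<Sum>x\<in>set (arcs n E). if x = (w,v) then 1 else 0)"
    by (rule sum.cong) auto
  also have "\<dots> = (if E w v then 1 else 0)"
  proof -
    have "(w,v) \<in> set (arcs n E) \<longleftrightarrow> E w v" using v w by (simp add: set_arcs)
    then show ?thesis by simp
  qed
  finally show "(transpose_mat (Lm n E) * Km n E) $$ (v,w) = Am n E $$ (v,w)"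
    using v w G unfolding simple_graph_def by (auto simp: Am_def)
qed auto

lemma swap_in: assumes G: "simple_graph n E" and x: "x \<in> set (arcs n E)"
  shows "prod.swap x \<in> set (arcs n E)"
  using assms unfolding simple_graph_def set_arcs by auto

lemma LtR: assumes G: "simple_graph n E" shows "transpose_mat (Lm n E) * Rm n E = transpose_mat (Km n E)"
proof (rule eq_matI)
  fix v j assume "v < dim_row (transpose_mat (Km n E))" "j < dim_col (transpose_mat (Km n E))"
  then have v: "v < n" and j: "j < length (arcs n E)" by auto
  have "(transpose_mat (Lm n E) * Rm n E) $$ (v,j) =
    (\<Sum>i\<in>{0..<length (arcs n E)}. (\<lambda>x. (if snd x = v then 1 else 0) * (if arcs n E ! j = prod.swap x then 1 else 0)) (arcs n E ! i))"
    using v j by (simp add: Rm_def Lm_def scalar_prod_def)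
  also have "\<dots> = (\<Sum>x\<in>set (arcs n E). (if snd x = v then 1 else 0) * (if arcs n E ! j = prod.swap x then 1 else 0))"
    by (rule sum_nth_distinct[OF distinct_arcs])
  also have "\<dots> = (\<Sum>x\<in>set (arcs n E). if x = prod.swap (arcs n E ! j) then (if fst (arcs n E ! j) = v then 1 else 0) else 0)"
    by (rule sum.cong) auto
  also have "\<dots> = (if fst (arcs n E ! j) = v then 1 else 0)"
    using swap_in[OF G arcs_nth_in[OF j]] by (subst sum.delta) auto
  finally show "(transpose_mat (Lm n E) * Rm n E) $$ (v,j) = transpose_mat (Km n E) $$ (v,j)"
    using v j by (auto simp: Km_def)
qed auto

lemma KtK: assumes R: "regular_graph n E k" shows "transpose_mat (Km n E) * Km n E = of_nat k \<cdot>\<^sub>m 1\<^sub>m n"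
proof (rule eq_matI)
  fix v w assume "v < dim_row (of_nat k \<cdot>\<^sub>m 1\<^sub>m n :: complex mat)" "w < dim_col (of_nat k \<cdot>\<^sub>m 1\<^sub>m n :: complex mat)"
  then have v: "v < n" and w: "w < n" by auto
  have "(transpose_mat (Km n E) * Km n E) $$ (v,w) =
    (\<Sum>i\<in>{0..<length (arcs n E)}. (\<lambda>x. (if fst x = v then 1 else 0) * (if fst x = w then 1 else 0)) (arcs n E ! i))"
    using v w by (simp add: Km_def scalar_prod_def)
  also have "\<dots> = (\<Sum>x\<in>set (arcs n E). (if fst x = v then 1 else 0) * (if fst x = w then 1 else 0))"
    by (rule sum_nth_distinct[OF distinct_arcs])
  also have "\<dots> = (if v = w then of_nat (card {x\<in>set (arcs n E). fst x = v}) else 0)"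
  proof (cases "v = w")
    case True
    have "(\<Sum>x\<in>set (arcs n E). (if fst x = v then 1 else 0) * (if fst x = w then 1 else 0))
       = (\<Sum>x\<in>set (arcs n E). if fst x = v then 1 else (0::complex))" using True by (intro sum.cong) auto
    also have "\<dots> = (\<Sum>x\<in>{x\<in>set (arcs n E). fst x = v}. 1)" by (subst sum.inter_filter) auto
    finally show ?thesis using True by simp
  next
    case False
    then show ?thesis by (auto intro!: sum.neutral)
  qed
  also have "card {x\<in>set (arcs n E). fst x = v} = deg n E v"
  proof -
    have "{x\<in>set (arcs n E). fst x = v} = Pair v ` {u. u < n \<and> E v u}"
      using v unfolding set_arcs by auto
    moreover have "inj (Pair v)" by (auto simp: inj_on_def)
    ultimately show ?thesis unfolding deg_def by (metis card_image inj_on_subset subset_UNIV)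
  qed
  also have "deg n E v = k" using R v unfolding regular_graph_def by auto
  finally show "(transpose_mat (Km n E) * Km n E) $$ (v,w) = (of_nat k \<cdot>\<^sub>m 1\<^sub>m n :: complex mat) $$ (v,w)"
    using v w by auto
qed auto

lemma RR: assumes G: "simple_graph n E" shows "Rm n E * Rm n E = 1\<^sub>m (length (arcs n E))"
proof (rule eq_matI)
  fix i j assume "i < dim_row (1\<^sub>m (length (arcs n E)) :: complex mat)" "j < dim_col (1\<^sub>m (length (arcs n E)) :: complex mat)"
  then have i: "i < length (arcs n E)" and j: "j < length (arcs n E)" by auto
  have "(Rm n E * Rm n E) $$ (i,j) =
    (\<Sum>k\<in>{0..<length (arcs n E)}. (\<lambda>x. (if x = prod.swap (arcs n E ! i) then 1 else 0) * (if arcs n E ! j = prod.swap x then 1 else 0)) (arcs n E ! k))"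
    using i j by (simp add: Rm_def scalar_prod_def)
  also have "\<dots> = (\<Sum>x\<in>set (arcs n E). (if x = prod.swap (arcs n E ! i) then 1 else 0) * (if arcs n E ! j = prod.swap x then 1 else 0))"
    by (rule sum_nth_distinct[OF distinct_arcs])
  also have "\<dots> = (\<Sum>x\<in>set (arcs n E). if x = prod.swap (arcs n E ! i) then (if arcs n E ! j = arcs n E ! i then 1 else 0) else 0)"
    by (rule sum.cong) auto
  also have "\<dots> = (if arcs n E ! j = arcs n E ! i then 1 else 0)"
    using swap_in[OF G arcs_nth_in[OF i]] by (subst sum.delta) auto
  also have "\<dots> = (if i = j then 1 else 0)"
    using distinct_arcs[of n E] i j by (auto simp: nth_eq_iff_index_eq)
  finally show "(Rm n E * Rm n E) $$ (i,j) = (1\<^sub>m (length (arcs n E)) :: complex mat) $$ (i,j)"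
    using i j by auto
qed auto

lemma DD: "Dm n E * Dm n E = 1\<^sub>m (length (arcs n E))"
proof (rule eq_matI)
  fix i j assume "i < dim_row (1\<^sub>m (length (arcs n E)) :: complex mat)" "j < dim_col (1\<^sub>m (length (arcs n E)) :: complex mat)"
  then have i: "i < length (arcs n E)" and j: "j < length (arcs n E)" by auto
  show "(Dm n E * Dm n E) $$ (i,j) = (1\<^sub>m (length (arcs n E)) :: complex mat) $$ (i,j)"
  proof -
    have "(Dm n E * Dm n E) $$ (i,j) = (\<Sum>k\<in>{0..<length (arcs n E)}. (if i = k then dd n E i else 0) * (if k = j then dd n E k else 0))"
      using i j by (simp add: Dm_def scalar_prod_def)
    also have "\<dots> = (\<Sum>k\<in>{0..<length (arcs n E)}. if k = i then dd n E i * (if k = j then dd n E j else 0) else 0)"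
      by (rule sum.cong) auto
    also have "\<dots> = (if i = j then 1 else 0)" using i by (simp add: dd_def)
    finally show ?thesis using i j by simp
  qed
qed auto



lemma lin1: assumes "(s::complex) = z*z - b*b" "s \<noteq> 0" shows "(1/s)*(z*(z*x - b*y) + b*(z*y - b*x)) = x"
proof -
  have "z*(z*x - b*y) + b*(z*y - b*x) = s*x" unfolding assms(1) by (simp add: algebra_simps)
  then show ?thesis using assms(2) by simp
qed

lemma smult_smult_mat: "a \<cdot>\<^sub>m (b \<cdot>\<^sub>m A) = (a * b :: 'a :: semigroup_mult) \<cdot>\<^sub>m A"
  by (intro eq_matI) (auto simp: mult.assoc)

lemma idx1: "(P::complex mat) \<in> carrier_mat n n \<Longrightarrow> i < n \<Longrightarrow> j < n \<Longrightarrow> (1\<^sub>m n - c \<cdot>\<^sub>m (z \<cdot>\<^sub>m (k \<cdot>\<^sub>m P) - b \<cdot>\<^sub>m (k \<cdot>\<^sub>m 1\<^sub>m n))) $$ (i,j)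
   = (1\<^sub>m n :: complex mat) $$ (i,j) - c * (z * (k * P $$ (i,j)) - b * (k * (1\<^sub>m n :: complex mat) $$ (i,j)))"
  by (subst index_minus_mat) simp_all
lemma idx2: "(P::complex mat) \<in> carrier_mat n n \<Longrightarrow> i < n \<Longrightarrow> j < n \<Longrightarrow> ((1 / s) \<cdot>\<^sub>m (c \<cdot>\<^sub>m 1\<^sub>m n - d \<cdot>\<^sub>m P)) $$ (i,j)
   = (1/s) * (c * (1\<^sub>m n :: complex mat) $$ (i,j) - d * P $$ (i,j))"
  by (subst index_smult_mat) simp_all
lemma idx3: "(R::complex mat) \<in> carrier_mat l l \<Longrightarrow> i < l \<Longrightarrow> j < l \<Longrightarrow> ((1/s) \<cdot>\<^sub>m (z \<cdot>\<^sub>m (z \<cdot>\<^sub>m 1\<^sub>m l - b \<cdot>\<^sub>m R) + b \<cdot>\<^sub>m (z \<cdot>\<^sub>m R - b \<cdot>\<^sub>m 1\<^sub>m l))) $$ (i,j) = 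
  (1/s)*(z*(z*(1\<^sub>m l :: complex mat) $$ (i,j) - b*R$$(i,j)) + b*(z*R$$(i,j) - b*(1\<^sub>m l :: complex mat) $$ (i,j)))"
  by (subst index_smult_mat) simp_all

lemma main_det:
  fixes K Lt R P U :: "complex mat" and z b \<alpha> k :: complex
  assumes K: "K \<in> carrier_mat l n" and Lt: "Lt \<in> carrier_mat n l" and R: "R \<in> carrier_mat l l"
    and P: "P \<in> carrier_mat n n"
    and RR: "R * R = 1\<^sub>m l" and LtK: "Lt * K = k \<cdot>\<^sub>m P" and LtRK: "Lt * R * K = k \<cdot>\<^sub>m 1\<^sub>m n"
    and U: "U = \<alpha> \<cdot>\<^sub>m (K * Lt) - b \<cdot>\<^sub>m R"
    and s: "z * z - b * b \<noteq> 0"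
  shows "det (z \<cdot>\<^sub>m 1\<^sub>m l - U) = det (z \<cdot>\<^sub>m 1\<^sub>m l + b \<cdot>\<^sub>m R) * (1 / (z * z - b * b)) ^ n
           * det ((z * z - b * b + \<alpha> * b * k) \<cdot>\<^sub>m 1\<^sub>m n - (\<alpha> * k * z) \<cdot>\<^sub>m P)"
proof -
  define s where "s = z * z - b * b"
  have s0: "s \<noteq> 0" using s unfolding s_def .
  define N where "N = z \<cdot>\<^sub>m 1\<^sub>m l + b \<cdot>\<^sub>m R"
  define M where "M = z \<cdot>\<^sub>m 1\<^sub>m l - b \<cdot>\<^sub>m R"
  define Ni where "Ni = (1 / s) \<cdot>\<^sub>m M"
  have zI: "z \<cdot>\<^sub>m 1\<^sub>m l \<in> carrier_mat l l" by (rule smult_carrier_mat[OF one_carrier_mat])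
  have bR: "b \<cdot>\<^sub>m R \<in> carrier_mat l l" by (rule smult_carrier_mat[OF R])
  have N: "N \<in> carrier_mat l l" unfolding N_def by (rule add_carrier_mat[OF bR])
  have M: "M \<in> carrier_mat l l" unfolding M_def by (rule minus_carrier_mat[OF bR])
  have Ni: "Ni \<in> carrier_mat l l" unfolding Ni_def by (rule smult_carrier_mat[OF M])
  have RM1: "R * M = R * (z \<cdot>\<^sub>m 1\<^sub>m l) - R * (b \<cdot>\<^sub>m R)"
    unfolding M_def by (rule mult_minus_distrib_mat[OF R zI bR])
  have RM2: "R * (z \<cdot>\<^sub>m 1\<^sub>m l) = z \<cdot>\<^sub>m R"
    using mult_smult_distrib[OF R one_carrier_mat, of z] unfolding right_mult_one_mat[OF R] .
  have RM3: "R * (b \<cdot>\<^sub>m R) = b \<cdot>\<^sub>m 1\<^sub>m l"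
    using mult_smult_distrib[OF R R, of b] unfolding RR .
  have RM: "R * M = z \<cdot>\<^sub>m R - b \<cdot>\<^sub>m 1\<^sub>m l" unfolding RM1 RM2 RM3 ..
  have NM1: "N * M = (z \<cdot>\<^sub>m 1\<^sub>m l) * M + (b \<cdot>\<^sub>m R) * M"
    unfolding N_def by (rule add_mult_distrib_mat[OF zI bR M])
  have NM2: "(z \<cdot>\<^sub>m 1\<^sub>m l) * M = z \<cdot>\<^sub>m M"
    using mult_smult_assoc_mat[OF one_carrier_mat M, of z] unfolding left_mult_one_mat[OF M] .
  have NM3: "(b \<cdot>\<^sub>m R) * M = b \<cdot>\<^sub>m (R * M)" by (rule mult_smult_assoc_mat[OF R M])
  have NM: "N * M = z \<cdot>\<^sub>m M + b \<cdot>\<^sub>m (z \<cdot>\<^sub>m R - b \<cdot>\<^sub>m 1\<^sub>m l)"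
    unfolding NM1 NM2 NM3 RM ..
  have NNi1: "N * Ni = (1 / s) \<cdot>\<^sub>m (N * M)" unfolding Ni_def by (rule mult_smult_distrib[OF N M])
  have NNi2: "(1 / s) \<cdot>\<^sub>m (N * M) = 1\<^sub>m l"
  proof (rule eq_matI)
    fix i j assume "i < dim_row (1\<^sub>m l :: complex mat)" "j < dim_col (1\<^sub>m l :: complex mat)"
    then have i: "i < l" and j: "j < l" by auto
    have "((1 / s) \<cdot>\<^sub>m (N * M)) $$ (i,j) = (1/s)*(z*(z*(1\<^sub>m l :: complex mat) $$ (i,j) - b*R$$(i,j)) + b*(z*R$$(i,j) - b*(1\<^sub>m l :: complex mat) $$ (i,j)))"
      unfolding NM unfolding M_def by (rule idx3[OF R i j])
    also have "\<dots> = (1\<^sub>m l :: complex mat) $$ (i,j)" by (rule lin1[OF s_def s0])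
    finally show "((1 / s) \<cdot>\<^sub>m (N * M)) $$ (i,j) = (1\<^sub>m l :: complex mat) $$ (i,j)" .
  next
    show "dim_row ((1 / s) \<cdot>\<^sub>m (N * M)) = dim_row (1\<^sub>m l :: complex mat)" using N M by simp
  next
    show "dim_col ((1 / s) \<cdot>\<^sub>m (N * M)) = dim_col (1\<^sub>m l :: complex mat)" using N M by simp
  qed
  have NNi: "N * Ni = 1\<^sub>m l" unfolding NNi1 NNi2 ..
  have KLt: "K * Lt \<in> carrier_mat l l" using K Lt by simp
  have aK: "Ni * (\<alpha> \<cdot>\<^sub>m K) \<in> carrier_mat l n" using Ni K by simp
  have aKL: "Ni * (\<alpha> \<cdot>\<^sub>m K) * Lt \<in> carrier_mat l l" using aK Lt by simp
  have F1: "N * (1\<^sub>m l - Ni * (\<alpha> \<cdot>\<^sub>m K) * Lt) = N * 1\<^sub>m l - N * (Ni * (\<alpha> \<cdot>\<^sub>m K) * Lt)"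
    by (rule mult_minus_distrib_mat[OF N one_carrier_mat aKL])
  have F2: "N * (Ni * (\<alpha> \<cdot>\<^sub>m K) * Lt) = N * (Ni * (\<alpha> \<cdot>\<^sub>m K)) * Lt"
    by (rule assoc_mult_mat[symmetric, OF N aK Lt])
  have F3: "N * (Ni * (\<alpha> \<cdot>\<^sub>m K)) = N * Ni * (\<alpha> \<cdot>\<^sub>m K)"
    by (rule assoc_mult_mat[symmetric, OF N Ni smult_carrier_mat[OF K]])
  have F4: "1\<^sub>m l * (\<alpha> \<cdot>\<^sub>m K) * Lt = \<alpha> \<cdot>\<^sub>m (K * Lt)"
    unfolding left_mult_one_mat[OF smult_carrier_mat[OF K]] by (rule mult_smult_assoc_mat[OF K Lt])
  have fac: "N * (1\<^sub>m l - Ni * (\<alpha> \<cdot>\<^sub>m K) * Lt) = N - \<alpha> \<cdot>\<^sub>m (K * Lt)"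
    unfolding F1 F2 F3 NNi F4 right_mult_one_mat[OF N] ..
  have G: "z \<cdot>\<^sub>m 1\<^sub>m l - U = N - \<alpha> \<cdot>\<^sub>m (K * Lt)"
  proof -
    define C where "C = K * Lt"
    have C: "C \<in> carrier_mat l l" using KLt unfolding C_def .
    have "z \<cdot>\<^sub>m 1\<^sub>m l - (\<alpha> \<cdot>\<^sub>m C - b \<cdot>\<^sub>m R) = N - \<alpha> \<cdot>\<^sub>m C"
      unfolding N_def using C R carrier_matD[OF R] carrier_matD[OF C] by (intro eq_matI) simp_all
    then show ?thesis unfolding U C_def .
  qed
  have D1: "det (z \<cdot>\<^sub>m 1\<^sub>m l - U) = det N * det (1\<^sub>m l - Ni * (\<alpha> \<cdot>\<^sub>m K) * Lt)"
    unfolding G fac[symmetric] by (rule det_mult[OF N minus_carrier_mat[OF aKL]])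
  have D2: "det (1\<^sub>m l - Ni * (\<alpha> \<cdot>\<^sub>m K) * Lt) = det (1\<^sub>m n - Lt * (Ni * (\<alpha> \<cdot>\<^sub>m K)))"
    by (rule sylvester_det[OF aK Lt])
  have RK: "R * K \<in> carrier_mat l n" using R K by simp
  have MK1: "M * K = (z \<cdot>\<^sub>m 1\<^sub>m l) * K - (b \<cdot>\<^sub>m R) * K"
    unfolding M_def by (rule minus_mult_distrib_mat[OF zI bR K])
  have MK2: "(z \<cdot>\<^sub>m 1\<^sub>m l) * K = z \<cdot>\<^sub>m K"
    using mult_smult_assoc_mat[OF one_carrier_mat K, of z] unfolding left_mult_one_mat[OF K] .
  have MK3: "(b \<cdot>\<^sub>m R) * K = b \<cdot>\<^sub>m (R * K)" by (rule mult_smult_assoc_mat[OF R K])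
  have MK: "M * K = z \<cdot>\<^sub>m K - b \<cdot>\<^sub>m (R * K)" unfolding MK1 MK2 MK3 ..
  have MKc: "M * K \<in> carrier_mat l n" using M K by simp
  have H1: "Ni * (\<alpha> \<cdot>\<^sub>m K) = \<alpha> \<cdot>\<^sub>m (Ni * K)" by (rule mult_smult_distrib[OF Ni K])
  have H2: "Ni * K = (1/s) \<cdot>\<^sub>m (M * K)" unfolding Ni_def by (rule mult_smult_assoc_mat[OF M K])
  have H3: "\<alpha> \<cdot>\<^sub>m ((1/s) \<cdot>\<^sub>m (M * K)) = (\<alpha> / s) \<cdot>\<^sub>m (M * K)" unfolding smult_smult_mat by simp
  have NaK: "Ni * (\<alpha> \<cdot>\<^sub>m K) = (\<alpha> / s) \<cdot>\<^sub>m (M * K)" unfolding H1 H2 H3 ..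
  have J1: "Lt * (Ni * (\<alpha> \<cdot>\<^sub>m K)) = (\<alpha> / s) \<cdot>\<^sub>m (Lt * (M * K))"
    unfolding NaK by (rule mult_smult_distrib[OF Lt MKc])
  have J2: "Lt * (M * K) = Lt * (z \<cdot>\<^sub>m K) - Lt * (b \<cdot>\<^sub>m (R * K))"
    unfolding MK by (rule mult_minus_distrib_mat[OF Lt smult_carrier_mat[OF K] smult_carrier_mat[OF RK]])
  have J3: "Lt * (z \<cdot>\<^sub>m K) = z \<cdot>\<^sub>m (Lt * K)" by (rule mult_smult_distrib[OF Lt K])
  have J4: "Lt * (b \<cdot>\<^sub>m (R * K)) = b \<cdot>\<^sub>m (Lt * (R * K))" by (rule mult_smult_distrib[OF Lt RK])
  have J5: "Lt * (R * K) = Lt * R * K" by (rule assoc_mult_mat[symmetric, OF Lt R K])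
  have J: "Lt * (Ni * (\<alpha> \<cdot>\<^sub>m K)) = (\<alpha> / s) \<cdot>\<^sub>m (z \<cdot>\<^sub>m (k \<cdot>\<^sub>m P) - b \<cdot>\<^sub>m (k \<cdot>\<^sub>m 1\<^sub>m n))"
    unfolding J1 J2 J3 J4 J5 LtK LtRK ..
  define c where "c = z * z - b * b + \<alpha> * b * k"
  define d where "d = \<alpha> * k * z"
  have Q: "1\<^sub>m n - (\<alpha> / s) \<cdot>\<^sub>m (z \<cdot>\<^sub>m (k \<cdot>\<^sub>m P) - b \<cdot>\<^sub>m (k \<cdot>\<^sub>m 1\<^sub>m n))
     = (1 / s) \<cdot>\<^sub>m (c \<cdot>\<^sub>m 1\<^sub>m n - d \<cdot>\<^sub>m P)"
  proof (rule eq_matI)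
    fix i j assume "i < dim_row ((1 / s) \<cdot>\<^sub>m (c \<cdot>\<^sub>m 1\<^sub>m n - d \<cdot>\<^sub>m P))"
       "j < dim_col ((1 / s) \<cdot>\<^sub>m (c \<cdot>\<^sub>m 1\<^sub>m n - d \<cdot>\<^sub>m P))"
    then have i: "i < n" and j: "j < n" using P by auto
    have e: "\<And>x y. x - (\<alpha> / s) * (z * (k * y) - b * (k * x)) = (1/s) * (c * x - d * y)"
      using s0 unfolding s_def c_def d_def by (simp add: field_simps)
    show "(1\<^sub>m n - (\<alpha> / s) \<cdot>\<^sub>m (z \<cdot>\<^sub>m (k \<cdot>\<^sub>m P) - b \<cdot>\<^sub>m (k \<cdot>\<^sub>m 1\<^sub>m n))) $$ (i,j) =
      ((1 / s) \<cdot>\<^sub>m (c \<cdot>\<^sub>m 1\<^sub>m n - d \<cdot>\<^sub>m P)) $$ (i,j)"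
      unfolding idx1[OF P i j] idx2[OF P i j] by (rule e)
  next
    show "dim_row (1\<^sub>m n - (\<alpha> / s) \<cdot>\<^sub>m (z \<cdot>\<^sub>m (k \<cdot>\<^sub>m P) - b \<cdot>\<^sub>m (k \<cdot>\<^sub>m 1\<^sub>m n))) = dim_row ((1 / s) \<cdot>\<^sub>m (c \<cdot>\<^sub>m 1\<^sub>m n - d \<cdot>\<^sub>m P))"
      using P by simp
  next
    show "dim_col (1\<^sub>m n - (\<alpha> / s) \<cdot>\<^sub>m (z \<cdot>\<^sub>m (k \<cdot>\<^sub>m P) - b \<cdot>\<^sub>m (k \<cdot>\<^sub>m 1\<^sub>m n))) = dim_col ((1 / s) \<cdot>\<^sub>m (c \<cdot>\<^sub>m 1\<^sub>m n - d \<cdot>\<^sub>m P))"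
      using P by simp
  qed
  have cdc: "c \<cdot>\<^sub>m 1\<^sub>m n - d \<cdot>\<^sub>m P \<in> carrier_mat n n" by (rule minus_carrier_mat[OF smult_carrier_mat[OF P]])
  have D3: "det ((1 / s) \<cdot>\<^sub>m (c \<cdot>\<^sub>m 1\<^sub>m n - d \<cdot>\<^sub>m P)) = (1 / s) ^ n * det (c \<cdot>\<^sub>m 1\<^sub>m n - d \<cdot>\<^sub>m P)"
    using det_smult[of "1/s" "c \<cdot>\<^sub>m 1\<^sub>m n - d \<cdot>\<^sub>m P"] carrier_matD[OF cdc] by simp
  show ?thesis unfolding D1 D2 J Q D3 unfolding N_def s_def c_def d_def by (simp only: mult.assoc)
qed



lemma Dleft: assumes X: "X \<in> carrier_mat (length (arcs n E)) c" and i: "i < length (arcs n E)" and j: "j < c"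
  shows "(Dm n E * X) $$ (i,j) = dd n E i * X $$ (i,j)"
proof -
  have "(Dm n E * X) $$ (i,j) = (\<Sum>k\<in>{0..<length (arcs n E)}. (if i = k then dd n E i else 0) * X $$ (k,j))"
    using X i j by (simp add: Dm_def scalar_prod_def)
  also have "\<dots> = (\<Sum>k\<in>{0..<length (arcs n E)}. if k = i then dd n E i * X $$ (i,j) else 0)"
    by (rule sum.cong) auto
  also have "\<dots> = dd n E i * X $$ (i,j)" using i by simp
  finally show ?thesis .
qed

lemma Dright: assumes X: "X \<in> carrier_mat r (length (arcs n E))" and i: "i < r" and j: "j < length (arcs n E)"
  shows "(X * Dm n E) $$ (i,j) = X $$ (i,j) * dd n E j"
proof -
  have "(X * Dm n E) $$ (i,j) = (\<Sum>k\<in>{0..<length (arcs n E)}. X $$ (i,k) * (if k = j then dd n E k else 0))"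
    using X i j by (simp add: Dm_def scalar_prod_def)
  also have "\<dots> = (\<Sum>k\<in>{0..<length (arcs n E)}. if k = j then X $$ (i,j) * dd n E j else 0)"
    by (rule sum.cong) auto
  also have "\<dots> = X $$ (i,j) * dd n E j" using j by simp
  finally show ?thesis .
qed

lemma dd_sq: "dd n E i * dd n E i = 1" by (simp add: dd_def)

lemma dd_swap: assumes G: "simple_graph n E" and i: "i < length (arcs n E)" and j: "j < length (arcs n E)"
  and sw: "arcs n E ! j = prod.swap (arcs n E ! i)"
  shows "dd n E i * dd n E j = -1"
proof -
  have "fst (arcs n E ! i) \<noteq> snd (arcs n E ! i)" using arcs_nth_props[OF i] G unfolding simple_graph_def by metis
  moreover have "fst (arcs n E ! j) = snd (arcs n E ! i)" "snd (arcs n E ! j) = fst (arcs n E ! i)"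
    using sw by (cases "arcs n E ! i", simp)+
  ultimately show ?thesis unfolding dd_def by auto
qed

lemma R_diag: assumes G: "simple_graph n E" and i: "i < length (arcs n E)"
  shows "Rm n E $$ (i,i) = 0"
proof -
  have "fst (arcs n E ! i) \<noteq> snd (arcs n E ! i)" using arcs_nth_props[OF i] G unfolding simple_graph_def by metis
  then have "arcs n E ! i \<noteq> prod.swap (arcs n E ! i)" by (cases "arcs n E ! i") auto
  then show ?thesis using i by (simp add: Rm_def)
qed

lemma DRD: assumes G: "simple_graph n E"
  shows "Dm n E * (z \<cdot>\<^sub>m 1\<^sub>m (length (arcs n E)) + b \<cdot>\<^sub>m Rm n E) * Dm n E
         = z \<cdot>\<^sub>m 1\<^sub>m (length (arcs n E)) - b \<cdot>\<^sub>m Rm n E"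
proof (rule eq_matI)
  let ?L = "length (arcs n E)"
  let ?Y = "z \<cdot>\<^sub>m 1\<^sub>m ?L + b \<cdot>\<^sub>m Rm n E"
  have Y: "?Y \<in> carrier_mat ?L ?L" by simp
  have DY: "Dm n E * ?Y \<in> carrier_mat ?L ?L" by (rule mult_carrier_mat[OF Dm_carrier Y])
  fix i j assume "i < dim_row (z \<cdot>\<^sub>m 1\<^sub>m ?L - b \<cdot>\<^sub>m Rm n E)" "j < dim_col (z \<cdot>\<^sub>m 1\<^sub>m ?L - b \<cdot>\<^sub>m Rm n E)"
  then have i: "i < ?L" and j: "j < ?L" by auto
  have "(Dm n E * ?Y * Dm n E) $$ (i,j) = dd n E i * ?Y $$ (i,j) * dd n E j"
    unfolding Dright[OF DY i j] Dleft[OF Y i j] ..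
  also have "\<dots> = (z \<cdot>\<^sub>m 1\<^sub>m ?L - b \<cdot>\<^sub>m Rm n E) $$ (i,j)"
  proof (cases "i = j")
    case True
    then show ?thesis using i R_diag[OF G i] dd_sq[of n E i] by (simp add: algebra_simps)
  next
    case False
    show ?thesis
    proof (cases "arcs n E ! j = prod.swap (arcs n E ! i)")
      case True
      then have "dd n E i * dd n E j = -1" by (rule dd_swap[OF G i j])
      then show ?thesis using i j False True
        by (simp add: Rm_def) (metis mult.commute mult.left_commute mult_minus1_right)
    next
      case F2: False
      then show ?thesis using i j False by (simp add: Rm_def)
    qed
  qed
  finally show "(Dm n E * ?Y * Dm n E) $$ (i,j) = (z \<cdot>\<^sub>m 1\<^sub>m ?L - b \<cdot>\<^sub>m Rm n E) $$ (i,j)" .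
qed auto

lemma NM_prod: fixes R :: "complex mat"
  assumes R: "R \<in> carrier_mat l l" and RR: "R * R = 1\<^sub>m l"
  shows "(z \<cdot>\<^sub>m 1\<^sub>m l + b \<cdot>\<^sub>m R) * (z \<cdot>\<^sub>m 1\<^sub>m l - b \<cdot>\<^sub>m R) = (z * z - b * b) \<cdot>\<^sub>m 1\<^sub>m l"
proof -
  define N where "N = z \<cdot>\<^sub>m 1\<^sub>m l + b \<cdot>\<^sub>m R"
  define M where "M = z \<cdot>\<^sub>m 1\<^sub>m l - b \<cdot>\<^sub>m R"
  have zI: "z \<cdot>\<^sub>m 1\<^sub>m l \<in> carrier_mat l l" by (rule smult_carrier_mat[OF one_carrier_mat])
  have bR: "b \<cdot>\<^sub>m R \<in> carrier_mat l l" by (rule smult_carrier_mat[OF R])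
  have M: "M \<in> carrier_mat l l" unfolding M_def by (rule minus_carrier_mat[OF bR])
  have RM1: "R * M = R * (z \<cdot>\<^sub>m 1\<^sub>m l) - R * (b \<cdot>\<^sub>m R)"
    unfolding M_def by (rule mult_minus_distrib_mat[OF R zI bR])
  have RM2: "R * (z \<cdot>\<^sub>m 1\<^sub>m l) = z \<cdot>\<^sub>m R"
    using mult_smult_distrib[OF R one_carrier_mat, of z] unfolding right_mult_one_mat[OF R] .
  have RM3: "R * (b \<cdot>\<^sub>m R) = b \<cdot>\<^sub>m 1\<^sub>m l"
    using mult_smult_distrib[OF R R, of b] unfolding RR .
  have RM: "R * M = z \<cdot>\<^sub>m R - b \<cdot>\<^sub>m 1\<^sub>m l" unfolding RM1 RM2 RM3 ..
  have NM1: "N * M = (z \<cdot>\<^sub>m 1\<^sub>m l) * M + (b \<cdot>\<^sub>m R) * M"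
    unfolding N_def by (rule add_mult_distrib_mat[OF zI bR M])
  have NM2: "(z \<cdot>\<^sub>m 1\<^sub>m l) * M = z \<cdot>\<^sub>m M"
    using mult_smult_assoc_mat[OF one_carrier_mat M, of z] unfolding left_mult_one_mat[OF M] .
  have NM3: "(b \<cdot>\<^sub>m R) * M = b \<cdot>\<^sub>m (R * M)" by (rule mult_smult_assoc_mat[OF R M])
  have NM: "N * M = z \<cdot>\<^sub>m (z \<cdot>\<^sub>m 1\<^sub>m l - b \<cdot>\<^sub>m R) + b \<cdot>\<^sub>m (z \<cdot>\<^sub>m R - b \<cdot>\<^sub>m 1\<^sub>m l)"
    unfolding NM1 NM2 NM3 RM unfolding M_def ..
  have "z \<cdot>\<^sub>m (z \<cdot>\<^sub>m 1\<^sub>m l - b \<cdot>\<^sub>m R) + b \<cdot>\<^sub>m (z \<cdot>\<^sub>m R - b \<cdot>\<^sub>m 1\<^sub>m l) = (z * z - b * b) \<cdot>\<^sub>m 1\<^sub>m l"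
  proof (rule eq_matI)
    fix i j assume "i < dim_row ((z * z - b * b) \<cdot>\<^sub>m 1\<^sub>m l :: complex mat)" "j < dim_col ((z * z - b * b) \<cdot>\<^sub>m 1\<^sub>m l :: complex mat)"
    then have i: "i < l" and j: "j < l" by auto
    have e: "\<And>x y. z * (z * x - b * y) + b * (z * y - b * x) = (z * z - b * b) * x" by (simp add: algebra_simps)
    have "(z \<cdot>\<^sub>m (z \<cdot>\<^sub>m 1\<^sub>m l - b \<cdot>\<^sub>m R) + b \<cdot>\<^sub>m (z \<cdot>\<^sub>m R - b \<cdot>\<^sub>m 1\<^sub>m l)) $$ (i,j)
       = z * (z * (1\<^sub>m l :: complex mat) $$ (i,j) - b * R $$ (i,j)) + b * (z * R $$ (i,j) - b * (1\<^sub>m l :: complex mat) $$ (i,j))"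
      using R i j by (subst index_add_mat) simp_all
    also have "\<dots> = ((z * z - b * b) \<cdot>\<^sub>m 1\<^sub>m l) $$ (i,j)" unfolding e using i j by (subst index_smult_mat) simp_all
    finally show "(z \<cdot>\<^sub>m (z \<cdot>\<^sub>m 1\<^sub>m l - b \<cdot>\<^sub>m R) + b \<cdot>\<^sub>m (z \<cdot>\<^sub>m R - b \<cdot>\<^sub>m 1\<^sub>m l)) $$ (i,j) = ((z * z - b * b) \<cdot>\<^sub>m 1\<^sub>m l) $$ (i,j)" .
  qed (use R in simp_all)
  then show ?thesis using NM unfolding N_def M_def by simp
qed

lemma detN_sq: assumes G: "simple_graph n E"
  shows "det (z \<cdot>\<^sub>m 1\<^sub>m (length (arcs n E)) + b \<cdot>\<^sub>m Rm n E) ^ 2 = (z * z - b * b) ^ length (arcs n E)"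
proof -
  let ?L = "length (arcs n E)"
  define N where "N = z \<cdot>\<^sub>m 1\<^sub>m ?L + b \<cdot>\<^sub>m Rm n E"
  define M where "M = z \<cdot>\<^sub>m 1\<^sub>m ?L - b \<cdot>\<^sub>m Rm n E"
  have N: "N \<in> carrier_mat ?L ?L" unfolding N_def by (rule add_carrier_mat[OF smult_carrier_mat[OF Rm_carrier]])
  have M: "M \<in> carrier_mat ?L ?L" unfolding M_def by (rule minus_carrier_mat[OF smult_carrier_mat[OF Rm_carrier]])
  have D: "Dm n E \<in> carrier_mat ?L ?L" by simp
  have "det M = det (Dm n E * N * Dm n E)" unfolding M_def N_def DRD[OF G] ..
  also have "\<dots> = det (Dm n E) * det N * det (Dm n E)"
    using det_mult[OF mult_carrier_mat[OF D N] D] det_mult[OF D N] by simp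
  also have "\<dots> = det N * det (Dm n E * Dm n E)" using det_mult[OF D D] by simp
  finally have MN: "det M = det N" unfolding DD by simp
  have "det (N * M) = (z * z - b * b) ^ ?L"
    unfolding N_def M_def NM_prod[OF Rm_carrier RR[OF G]] by simp
  then show ?thesis using det_mult[OF N M] MN unfolding N_def by (simp add: power2_eq_square)
qed



lemma U_decomp: assumes G: "simple_graph n E" and R: "regular_graph n E k"
  shows "map_mat complex_of_real (gen_grover n E a b) =
    complex_of_real ((2 / real k - 1) * a + b) \<cdot>\<^sub>m (Km n E * transpose_mat (Lm n E)) - complex_of_real b \<cdot>\<^sub>m Rm n E"
proof (rule eq_matI)
  let ?A = "arcs n E"
  fix i j assume "i < dim_row (complex_of_real ((2 / real k - 1) * a + b) \<cdot>\<^sub>m (Km n E * transpose_mat (Lm n E)) - complex_of_real b \<cdot>\<^sub>m Rm n E)"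
    "j < dim_col (complex_of_real ((2 / real k - 1) * a + b) \<cdot>\<^sub>m (Km n E * transpose_mat (Lm n E)) - complex_of_real b \<cdot>\<^sub>m Rm n E)"
  then have i: "i < length ?A" and j: "j < length ?A" by auto
  have dg: "deg n E (snd (?A ! j)) = k" using R arcs_nth_props[OF j] unfolding regular_graph_def by auto
  have dg2: "deg n E (fst (?A ! i)) = k" using R arcs_nth_props[OF i] unfolding regular_graph_def by auto
  have KL: "(Km n E * transpose_mat (Lm n E)) $$ (i,j) = (if snd (?A ! j) = fst (?A ! i) then 1 else 0)"
    unfolding KLt using i j by simp
  obtain u v where uv: "?A ! i = (u,v)" by (cases "?A ! i")
  obtain u' v' where uv': "?A ! j = (u',v')" by (cases "?A ! j")
  have lhs: "map_mat complex_of_real (gen_grover n E a b) $$ (i,j) = complex_of_real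
     (if ?A ! j = (snd (?A ! i), fst (?A ! i)) then (2 / real k - 1) * a
      else if snd (?A ! j) = fst (?A ! i) then (2 / real k - 1) * a + b else 0)"
    using i j dg dg2 unfolding gen_grover_def Let_def by simp
  show "map_mat complex_of_real (gen_grover n E a b) $$ (i,j) =
    (complex_of_real ((2 / real k - 1) * a + b) \<cdot>\<^sub>m (Km n E * transpose_mat (Lm n E)) - complex_of_real b \<cdot>\<^sub>m Rm n E) $$ (i,j)"
    unfolding lhs using i j KL uv uv' by (auto simp: Rm_def)
qed (auto simp: gen_grover_def Let_def)

lemma P_decomp: assumes R: "regular_graph n E k" and k: "k > 0"
  shows "Am n E = of_nat k \<cdot>\<^sub>m map_mat complex_of_real (trans_mat n E)"
proof (rule eq_matI)
  fix u v assume "u < dim_row (of_nat k \<cdot>\<^sub>m map_mat complex_of_real (trans_mat n E))"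
    "v < dim_col (of_nat k \<cdot>\<^sub>m map_mat complex_of_real (trans_mat n E))"
  then have u: "u < n" and v: "v < n" by (auto simp: trans_mat_def)
  have "deg n E u = k" using R u unfolding regular_graph_def by auto
  then show "Am n E $$ (u,v) = (of_nat k \<cdot>\<^sub>m map_mat complex_of_real (trans_mat n E)) $$ (u,v)"
    using u v k by (simp add: Am_def trans_mat_def)
qed (auto simp: trans_mat_def)

lemma poly_prod_list: "poly (\<Prod>x\<leftarrow>xs. f x) z = (\<Prod>x\<leftarrow>xs. poly (f x) z)"
  by (induct xs) auto

lemma degree_prod_lin: "degree (\<Prod>\<mu>\<leftarrow>mus. [:- \<mu>, 1::complex:]) = length mus"
proof (induct mus)
  case (Cons a mus)
  define Q where "Q = (\<Prod>\<mu>\<leftarrow>mus. [:- \<mu>, 1::complex:])"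
  have nz: "Q \<noteq> 0" unfolding Q_def by (auto simp: prod_list_zero_iff)
  have e: "(\<Prod>\<mu>\<leftarrow>a # mus. [:- \<mu>, 1::complex:]) = [:- a, 1:] * Q" unfolding Q_def by simp
  have "degree ([:- a, 1:] * Q) = degree [:- a, 1::complex:] + degree Q"
    by (rule degree_mult_eq) (use nz in auto)
  then show ?case unfolding e using Cons unfolding Q_def by simp
qed simp

lemma prod_scale: "(\<Prod>x\<leftarrow>xs. (d::complex) * f x) = d ^ length xs * (\<Prod>x\<leftarrow>xs. f x)"
  by (induct xs) (auto simp: algebra_simps)

lemma prod_const: "(\<Prod>x\<leftarrow>xs. (c::complex)) = c ^ length xs"
  by (induct xs) auto

lemma poly_char_poly_det: assumes A: "(A :: complex mat) \<in> carrier_mat n n"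
  shows "poly (char_poly A) z = det (z \<cdot>\<^sub>m 1\<^sub>m n - A)"
proof -
  have "- char_matrix A z = z \<cdot>\<^sub>m 1\<^sub>m n - A"
    using A unfolding char_matrix_def by (intro eq_matI) auto
  then show ?thesis using char_poly_matrix[OF A, of z] by simp
qed

lemma det_lin: assumes P: "(P :: complex mat) \<in> carrier_mat n n"
  and cp: "char_poly P = (\<Prod>\<mu>\<leftarrow>mus. [:- \<mu>, 1:])"
  shows "det (c \<cdot>\<^sub>m 1\<^sub>m n - d \<cdot>\<^sub>m P) = (\<Prod>\<mu>\<leftarrow>mus. c - d * \<mu>)"
proof -
  have len: "length mus = n" using degree_monic_char_poly[OF P] unfolding cp degree_prod_lin by simp
  show ?thesis
  proof (cases "d = 0")
    case True
    have "c \<cdot>\<^sub>m 1\<^sub>m n - d \<cdot>\<^sub>m P = c \<cdot>\<^sub>m 1\<^sub>m n" using P True by (intro eq_matI) auto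
    then show ?thesis using True len by (simp add: prod_const)
  next
    case False
    have "c \<cdot>\<^sub>m 1\<^sub>m n - d \<cdot>\<^sub>m P = d \<cdot>\<^sub>m ((c / d) \<cdot>\<^sub>m 1\<^sub>m n - P)" using P False by (intro eq_matI) (auto simp: field_simps)
    then have "det (c \<cdot>\<^sub>m 1\<^sub>m n - d \<cdot>\<^sub>m P) = d ^ n * det ((c / d) \<cdot>\<^sub>m 1\<^sub>m n - P)" using P by simp
    also have "det ((c / d) \<cdot>\<^sub>m 1\<^sub>m n - P) = (\<Prod>\<mu>\<leftarrow>mus. c / d - \<mu>)"
      using poly_char_poly_det[OF P, of "c / d"] unfolding cp poly_prod_list by simp
    also have "d ^ n * (\<Prod>\<mu>\<leftarrow>mus. c / d - \<mu>) = (\<Prod>\<mu>\<leftarrow>mus. d * (c / d - \<mu>))"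
      unfolding prod_scale len ..
    also have "\<dots> = (\<Prod>\<mu>\<leftarrow>mus. c - d * \<mu>)" using False by (simp add: algebra_simps)
    finally show ?thesis .
  qed
qed

lemma lead_coeff_prod_monic: "(\<And>x. x \<in> set xs \<Longrightarrow> lead_coeff (f x :: complex poly) = 1) \<Longrightarrow> lead_coeff (\<Prod>x\<leftarrow>xs. f x) = 1"
  by (induct xs) (auto simp: lead_coeff_mult)

lemma poly_eq_cofinite: fixes p q :: "complex poly"
  assumes "\<And>z. z \<noteq> w1 \<Longrightarrow> z \<noteq> w2 \<Longrightarrow> poly p z = poly q z"
  shows "p = q"
proof (rule ccontr)
  assume "p \<noteq> q"
  then have "p - q \<noteq> 0" by simp
  then have fin: "finite {z. poly (p - q) z = 0}" by (rule poly_roots_finite)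
  have "UNIV - {w1, w2} \<subseteq> {z. poly (p - q) z = 0}" using assms by auto
  then have "finite (UNIV - {w1, w2} :: complex set)" using fin finite_subset by blast
  then have "finite (UNIV :: complex set)" by simp
  then show False using infinite_UNIV_char_0 by blast
qed



lemma quad_roots: fixes A w s z :: complex
  assumes w: "w ^ 2 = A ^ 2 - 4 * s"
  shows "(z - (A + w) / 2) * (z - (A - w) / 2) = z * z + s - A * z"
proof -
  have p: "((A + w) / 2) * ((A - w) / 2) = (A * A - w * w) / 4" by (simp add: field_simps algebra_simps)
  also have "\<dots> = s" using w by (simp add: power2_eq_square)
  finally have p': "((A + w) / 2) * ((A - w) / 2) = s" .
  have sm: "(A + w) / 2 + (A - w) / 2 = A" by (simp add: field_simps)
  have "(z - (A + w) / 2) * (z - (A - w) / 2) = z * z - ((A + w) / 2 + (A - w) / 2) * z + ((A + w) / 2) * ((A - w) / 2)"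
    by (simp add: algebra_simps)
  then show ?thesis unfolding sm p' by simp
qed

theorem corollary4:
  fixes n q m :: nat and E :: "nat \<Rightarrow> nat \<Rightarrow> bool" and a b :: real
    and mus :: "complex list"
  assumes "simple_graph n E" and "connected_graph n E"
    and "q \<ge> 1" and "regular_graph n E (q + 1)"
    and "m = num_edges n E"
    and "0 \<le> a" and "a \<le> 1"
    and "char_poly (map_mat complex_of_real (trans_mat n E)) = (\<Prod>\<mu>\<leftarrow>mus. [:- \<mu>, 1:])"
  shows "let \<eta> = (1 - real q) * a + b * (real q + 1);
             \<sigma> = b * ((1 - real q) * a + b * real q)
         in char_poly (map_mat complex_of_real (gen_grover n E a b)) =
              (\<Prod>\<mu>\<leftarrow>mus.
                  [:- ((\<mu> * of_real \<eta> + csqrt (\<mu>\<^sup>2 * of_real (\<eta>\<^sup>2) - 4 * of_real \<sigma>)) / 2), 1:]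
                * [:- ((\<mu> * of_real \<eta> - csqrt (\<mu>\<^sup>2 * of_real (\<eta>\<^sup>2) - 4 * of_real \<sigma>)) / 2), 1:])
              * [:- complex_of_real b, 1:] ^ (m - n)
              * [:complex_of_real b, 1:] ^ (m - n)"
proof -
  note G = assms(1)
  define k where "k = q + 1"
  have Rg: "regular_graph n E k" using assms(4) unfolding k_def .
  have k0: "k > 0" unfolding k_def by simp
  define L where "L = length (arcs n E)"
  have Lcard: "L = card (set (arcs n E))" unfolding L_def using distinct_card[OF distinct_arcs] by simp
  have L1: "L = n * k"
  proof -
    have "L = (\<Sum>u<n. deg n E u)" unfolding Lcard by (rule card_arcs_deg)
    also have "\<dots> = (\<Sum>u<n. k)" using Rg unfolding regular_graph_def by (intro sum.cong) auto
    finally show ?thesis by simp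
  qed
  have L2: "L = 2 * m" unfolding Lcard assms(5) by (rule card_arcs_edges[OF G])
  have "n * 2 \<le> n * k" unfolding k_def using assms(3) by (intro mult_le_mono2) simp
  then have mn: "n \<le> m" using L1 L2 by linarith
  define \<eta> where "\<eta> = (1 - real q) * a + b * (real q + 1)"
  define \<sigma> where "\<sigma> = b * ((1 - real q) * a + b * real q)"
  define U where "U = map_mat complex_of_real (gen_grover n E a b)"
  define P where "P = map_mat complex_of_real (trans_mat n E)"
  define Q where "Q = (\<Prod>\<mu>\<leftarrow>mus.
                  [:- ((\<mu> * of_real \<eta> + csqrt (\<mu>\<^sup>2 * of_real (\<eta>\<^sup>2) - 4 * of_real \<sigma>)) / 2), 1:]
                * [:- ((\<mu> * of_real \<eta> - csqrt (\<mu>\<^sup>2 * of_real (\<eta>\<^sup>2) - 4 * of_real \<sigma>)) / 2), 1:])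
              * [:- complex_of_real b, 1:] ^ (m - n)
              * [:complex_of_real b, 1:] ^ (m - n)"
  define \<alpha> where "\<alpha> = complex_of_real ((2 / real k - 1) * a + b)"
  define bc where "bc = complex_of_real b"
  define kc where "kc = (of_nat k :: complex)"
  have Ucar: "U \<in> carrier_mat L L" unfolding U_def L_def by (simp add: gen_grover_def Let_def)
  have Pcar: "P \<in> carrier_mat n n" unfolding P_def by (simp add: trans_mat_def)
  have cpP: "char_poly P = (\<Prod>\<mu>\<leftarrow>mus. [:- \<mu>, 1:])" unfolding P_def by (rule assms(8))
  have Ud: "U = \<alpha> \<cdot>\<^sub>m (Km n E * transpose_mat (Lm n E)) - bc \<cdot>\<^sub>m Rm n E"
    unfolding U_def \<alpha>_def bc_def by (rule U_decomp[OF G Rg])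
  have LtK': "transpose_mat (Lm n E) * Km n E = kc \<cdot>\<^sub>m P"
    unfolding LtK[OF G] P_def kc_def by (rule P_decomp[OF Rg k0])
  have LtRK': "transpose_mat (Lm n E) * Rm n E * Km n E = kc \<cdot>\<^sub>m 1\<^sub>m n"
    unfolding LtR[OF G] KtK[OF Rg] kc_def ..
  have Kc: "Km n E \<in> carrier_mat L n" unfolding L_def by simp
  have Ltc: "transpose_mat (Lm n E) \<in> carrier_mat n L" unfolding L_def by simp
  have Rc: "Rm n E \<in> carrier_mat L L" unfolding L_def by simp
  have RR': "Rm n E * Rm n E = 1\<^sub>m L" unfolding L_def by (rule RR[OF G])
  have ak: "\<alpha> * kc = complex_of_real \<eta>"
  proof -
    have "((2 / real k - 1) * a + b) * real k = \<eta>" unfolding \<eta>_def k_def by (simp add: field_simps)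
    then show ?thesis unfolding \<alpha>_def kc_def by (metis of_real_mult of_real_of_nat_eq)
  qed
  have sg: "complex_of_real \<sigma> = complex_of_real \<eta> * bc - bc * bc"
    unfolding \<sigma>_def \<eta>_def bc_def by (simp add: algebra_simps)
  define T where "T = (\<lambda>z. \<Prod>\<mu>\<leftarrow>mus. z * z + complex_of_real \<sigma> - complex_of_real \<eta> * \<mu> * z)"
  have pt: "poly (char_poly U ^ 2) z = poly (Q ^ 2) z" if z1: "z \<noteq> bc" and z2: "z \<noteq> - bc" for z
  proof -
    define s where "s = z * z - bc * bc"
    have s0: "s \<noteq> 0"
    proof
      assume "s = 0"
      then have "(z - bc) * (z + bc) = 0" unfolding s_def by (simp add: algebra_simps)
      then show False using z1 z2 by (simp add: add_eq_0_iff2)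
    qed
    have "poly (char_poly U) z = det (z \<cdot>\<^sub>m 1\<^sub>m L - U)" by (rule poly_char_poly_det[OF Ucar])
    also have "\<dots> = det (z \<cdot>\<^sub>m 1\<^sub>m L + bc \<cdot>\<^sub>m Rm n E) * (1 / s) ^ n
           * det ((z * z - bc * bc + \<alpha> * bc * kc) \<cdot>\<^sub>m 1\<^sub>m n - (\<alpha> * kc * z) \<cdot>\<^sub>m P)"
      unfolding s_def by (rule main_det[OF Kc Ltc Rc Pcar RR' LtK' LtRK' Ud s0[unfolded s_def]])
    also have "det ((z * z - bc * bc + \<alpha> * bc * kc) \<cdot>\<^sub>m 1\<^sub>m n - (\<alpha> * kc * z) \<cdot>\<^sub>m P)
       = (\<Prod>\<mu>\<leftarrow>mus. (z * z - bc * bc + \<alpha> * bc * kc) - (\<alpha> * kc * z) * \<mu>)"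
      by (rule det_lin[OF Pcar cpP])
    also have "(\<Prod>\<mu>\<leftarrow>mus. (z * z - bc * bc + \<alpha> * bc * kc) - (\<alpha> * kc * z) * \<mu>) = T z"
      unfolding T_def
    proof (rule arg_cong[where f = prod_list], rule map_cong[OF refl])
      fix \<mu> show "(z * z - bc * bc + \<alpha> * bc * kc) - (\<alpha> * kc * z) * \<mu> = z * z + complex_of_real \<sigma> - complex_of_real \<eta> * \<mu> * z"
        unfolding sg ak[symmetric] by (simp add: algebra_simps)
    qed
    finally have pc: "poly (char_poly U) z = det (z \<cdot>\<^sub>m 1\<^sub>m L + bc \<cdot>\<^sub>m Rm n E) * (1 / s) ^ n * T z" .
    have dN: "det (z \<cdot>\<^sub>m 1\<^sub>m L + bc \<cdot>\<^sub>m Rm n E) ^ 2 = s ^ L"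
      unfolding s_def L_def by (rule detN_sq[OF G])
    have "poly (char_poly U ^ 2) z = det (z \<cdot>\<^sub>m 1\<^sub>m L + bc \<cdot>\<^sub>m Rm n E) ^ 2 * ((1 / s) ^ n) ^ 2 * T z ^ 2"
      unfolding poly_power pc by (simp add: power_mult_distrib)
    also have "\<dots> = s ^ (2 * m) * ((1 / s) ^ (2 * n)) * T z ^ 2" unfolding dN unfolding L2 by (simp add: power_mult[symmetric] mult.commute)
    also have "s ^ (2 * m) * ((1 / s) ^ (2 * n)) = s ^ (2 * (m - n))"
    proof -
      have e: "2 * m = 2 * (m - n) + 2 * n" using mn by simp
      have "s ^ (2 * m) = s ^ (2 * (m - n)) * s ^ (2 * n)" unfolding power_add[symmetric] e[symmetric] ..
      then show ?thesis using s0 by (simp add: power_one_over)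
    qed
    finally have lhs: "poly (char_poly U ^ 2) z = s ^ (2 * (m - n)) * T z ^ 2" .
    have pQ: "poly Q z = T z * s ^ (m - n)"
    proof -
      define F where "F = (\<lambda>\<mu>. [:- ((\<mu> * of_real \<eta> + csqrt (\<mu>\<^sup>2 * of_real (\<eta>\<^sup>2) - 4 * of_real \<sigma>)) / 2), 1:]
                * [:- ((\<mu> * of_real \<eta> - csqrt (\<mu>\<^sup>2 * of_real (\<eta>\<^sup>2) - 4 * of_real \<sigma>)) / 2), 1:])"
      have QF: "Q = (\<Prod>\<mu>\<leftarrow>mus. F \<mu>) * [:- bc, 1:] ^ (m - n) * [:bc, 1:] ^ (m - n)"
        by (simp only: Q_def F_def bc_def)
      have Fm: "poly (F \<mu>) z = z * z + complex_of_real \<sigma> - complex_of_real \<eta> * \<mu> * z" for \<mu>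
      proof -
        have w: "csqrt (\<mu>\<^sup>2 * of_real (\<eta>\<^sup>2) - 4 * of_real \<sigma>) ^ 2 = (\<mu> * of_real \<eta>) ^ 2 - 4 * of_real \<sigma>"
          by (simp add: power_mult_distrib)
        show ?thesis unfolding F_def using quad_roots[OF w, of z] by (simp add: algebra_simps)
      qed
      have "poly (\<Prod>\<mu>\<leftarrow>mus. F \<mu>) z = T z"
        unfolding poly_prod_list T_def Fm ..
      moreover have "poly ([:- bc, 1:] ^ (m - n) * [:bc, 1:] ^ (m - n)) z = s ^ (m - n)"
        unfolding poly_mult poly_power s_def power_mult_distrib[symmetric] by (simp add: algebra_simps)
      ultimately show ?thesis unfolding QF mult.assoc poly_mult by simp
    qed
    have "poly (Q ^ 2) z = s ^ (2 * (m - n)) * T z ^ 2"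
      unfolding poly_power pQ by (simp add: power_mult_distrib power_mult[symmetric] mult.commute)
    then show ?thesis using lhs by simp
  qed
  have sq: "char_poly U ^ 2 = Q ^ 2" by (rule poly_eq_cofinite[of bc "- bc"]) (use pt in auto)
  have "(char_poly U - Q) * (char_poly U + Q) = 0"
    using sq by (simp add: algebra_simps power2_eq_square)
  then have or: "char_poly U = Q \<or> char_poly U = - Q"
    by (auto simp: eq_neg_iff_add_eq_0)
  have lcU: "lead_coeff (char_poly U) = 1" using degree_monic_char_poly[OF Ucar] by simp
  have lcQ: "lead_coeff Q = 1" unfolding Q_def
    by (simp add: lead_coeff_mult lead_coeff_power lead_coeff_prod_monic)
  have "char_poly U = Q"
  proof (rule ccontr)
    assume "char_poly U \<noteq> Q"
    then have "char_poly U = - Q" using or by simp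
    then have "lead_coeff (char_poly U) = - 1" using lcQ by simp
    then show False using lcU by simp
  qed
  then show ?thesis unfolding Let_def U_def Q_def \<eta>_def \<sigma>_def .
qed


end
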